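(* Let $C$ be a commutative semigroup and let $I$ be an ideal of $C$ with $\mathrm{Sep}\, I\neq\emptyset$. Then $P_I$ is a congruence on $C$ such that $I$ and $\mathrm{Sep}\, I$ are $P_I$-classes of $C$, and the factor semigroup $S=C/P_I$ satisfies Condition $( * )$. Conversely, if $\alpha$ is a congruence on a commutative semigroup $C$ such that the factor semigroup $C/\alpha$ satisfies Condition $( * )$, then there is an ideal $I$ of $C$ such that $\alpha=P_I$.
   Context: For a semigroup $S$ and a subset $A\subseteq S$, the idealizer of $A$ is $\mathrm{Id}\,A=\{x\in S: xA\subseteq A,\ Ax\subseteq A\}$ (so $\mathrm{Id}\,\emptyset=S$), and the separator of $A$ is $\mathrm{Sep}\,A=\mathrm{Id}\,A\cap \mathrm{Id}(S\setminus A)$. For $H\subseteq S$ and $a\in S$, let $H\dots a=\{(x,y)\in S\times S: xay\in H\}$ (here $x,y$ range over $S$), and let $P_H=\{(a,b)\in S\times S: H\dots a=H\dots b\}$, the principal congruence on $S$ defined by $H$. For a commutative semigroup $S$ with zero $0$ and $s\in S$, the annihilator is $A(s)=\{x\in S: xs=0\}$. A semigroup $S$ satisfies Condition $( * )$ if: (1) $S$ is a commutative monoid with a zero; (2) for every non-identity element $s$ of $S$, $A(s)\neq\{0\}$; (3) for all $s,t\in S$, $A(s)=A(t)$ implies $s=t$. (A one-element semigroup satisfies Condition $( * )$.) *)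

theory Defs
  imports Main
begin

definition sg_ideal :: "'a::ab_semigroup_mult set \<Rightarrow> bool" where
  "sg_ideal I \<longleftrightarrow> I \<noteq> {} \<and> (\<forall>s a. a \<in> I \<longrightarrow> s * a \<in> I \<and> a * s \<in> I)"

definition idealizer :: "'a::ab_semigroup_mult set \<Rightarrow> 'a set" where
  "idealizer A = {x. (\<forall>a\<in>A. x * a \<in> A) \<and> (\<forall>a\<in>A. a * x \<in> A)}"

definition separator :: "'a::ab_semigroup_mult set \<Rightarrow> 'a set" where
  "separator A = idealizer A \<inter> idealizer (- A)"

definition resid :: "'a::ab_semigroup_mult set \<Rightarrow> 'a \<Rightarrow> ('a \<times> 'a) set" where
  "resid H a = {(x, y). x * a * y \<in> H}"

definition princ_cong :: "'a::ab_semigroup_mult set \<Rightarrow> 'a rel" where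
  "princ_cong H = {(a, b). resid H a = resid H b}"

definition sg_congruence :: "'a::ab_semigroup_mult rel \<Rightarrow> bool" where
  "sg_congruence \<alpha> \<longleftrightarrow> equiv UNIV \<alpha> \<and>
     (\<forall>a b c. (a, b) \<in> \<alpha> \<longrightarrow> (a * c, b * c) \<in> \<alpha> \<and> (c * a, c * b) \<in> \<alpha>)"

(* multiplication of classes in the factor semigroup C/alpha (well defined for congruences) *)
definition quot_mult :: "'a::ab_semigroup_mult rel \<Rightarrow> 'a set \<Rightarrow> 'a set \<Rightarrow> 'a set" where
  "quot_mult \<alpha> X Y = \<alpha> `` {(SOME x. x \<in> X) * (SOME y. y \<in> Y)}"

definition annih :: "'b set \<Rightarrow> ('b \<Rightarrow> 'b \<Rightarrow> 'b) \<Rightarrow> 'b \<Rightarrow> 'b \<Rightarrow> 'b set" where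
  "annih S m z s = {x \<in> S. m x s = z}"

definition cond_star :: "'b set \<Rightarrow> ('b \<Rightarrow> 'b \<Rightarrow> 'b) \<Rightarrow> bool" where
  "cond_star S m \<longleftrightarrow>
     (\<forall>x\<in>S. \<forall>y\<in>S. m x y \<in> S) \<and>
     (\<forall>x\<in>S. \<forall>y\<in>S. \<forall>w\<in>S. m (m x y) w = m x (m y w)) \<and>
     (\<forall>x\<in>S. \<forall>y\<in>S. m x y = m y x) \<and>
     (\<exists>e\<in>S. \<exists>z\<in>S. (\<forall>x\<in>S. m e x = x \<and> m x e = x) \<and>
        (\<forall>x\<in>S. m z x = z \<and> m x z = z) \<and>
        (\<forall>s\<in>S. s \<noteq> e \<longrightarrow> annih S m z s \<noteq> {z}) \<and>
        (\<forall>s\<in>S. \<forall>t\<in>S. annih S m z s = annih S m z t \<longrightarrow> s = t))"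

end

theory Submission
  imports Defs
begin

lemma cls_eq: "equiv UNIV r \<Longrightarrow> (r``{a} = r``{b}) = ((a,b) \<in> r)"
  by (simp add: eq_equiv_class_iff)

lemma qm:
  assumes "sg_congruence \<alpha>"
  shows "quot_mult \<alpha> (\<alpha>``{a}) (\<alpha>``{b}) = \<alpha>``{a*b}"
proof -
  have eq: "equiv UNIV \<alpha>" using assms by (simp add: sg_congruence_def)
  have ina: "a \<in> \<alpha>``{a}" "b \<in> \<alpha>``{b}" using eq unfolding equiv_def refl_on_def by auto
  define x where "x = (SOME x. x \<in> \<alpha>``{a})"
  define y where "y = (SOME y. y \<in> \<alpha>``{b})"
  have "x \<in> \<alpha>``{a}" "y \<in> \<alpha>``{b}" unfolding x_def y_def using ina by (auto intro: someI)
  hence h: "(a,x) \<in> \<alpha>" "(b,y) \<in> \<alpha>" by auto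
  have "(a*b, x*b) \<in> \<alpha>" using assms h(1) by (simp add: sg_congruence_def)
  moreover have "(x*b, x*y) \<in> \<alpha>" using assms h(2) by (simp add: sg_congruence_def)
  ultimately have "(a*b, x*y) \<in> \<alpha>" using eq by (meson equiv_def trans_def)
  hence "\<alpha>``{x*y} = \<alpha>``{a*b}" using eq by (metis cls_eq)
  thus ?thesis unfolding quot_mult_def x_def y_def by simp
qed

lemma quot_ex: "X \<in> UNIV // r \<Longrightarrow> \<exists>a. X = r``{a}"
  by (auto simp: quotient_def)

lemma pc_cong: "sg_congruence (princ_cong I)"
proof -
  have "equiv UNIV (princ_cong I)"
    by (auto simp: equiv_def refl_on_def sym_def trans_def princ_cong_def)
  moreover have "(a * c, b * c) \<in> princ_cong I \<and> (c * a, c * b) \<in> princ_cong I"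
    if "(a,b) \<in> princ_cong I" for a b c
  proof -
    have r: "\<And>x y. x*a*y \<in> I \<longleftrightarrow> x*b*y \<in> I" using that
      by (auto simp: princ_cong_def resid_def set_eq_iff)
    have "x*(a*c)*y \<in> I \<longleftrightarrow> x*(b*c)*y \<in> I" for x y
      using r[of x "c*y"] by (simp add: mult.assoc)
    moreover have "x*(c*a)*y \<in> I \<longleftrightarrow> x*(c*b)*y \<in> I" for x y
      using r[of x "c*y"] by (simp add: ac_simps)
    ultimately show ?thesis by (auto simp: princ_cong_def resid_def)
  qed
  ultimately show ?thesis by (simp add: sg_congruence_def)
qed

lemma pc_iff: "(a,b) \<in> princ_cong I \<longleftrightarrow> (\<forall>x y. x*a*y \<in> I \<longleftrightarrow> x*b*y \<in> I)"
  by (auto simp: princ_cong_def resid_def set_eq_iff)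

lemma part1:
  fixes I :: "'a::ab_semigroup_mult set"
  assumes id: "sg_ideal I" and sep: "s \<in> separator I"
  shows "sg_congruence (princ_cong I) \<and>
            I \<in> UNIV // princ_cong I \<and> separator I \<in> UNIV // princ_cong I \<and>
            cond_star (UNIV // princ_cong I) (quot_mult (princ_cong I))"
proof -
  let ?P = "princ_cong I"
  have C: "sg_congruence ?P" by (rule pc_cong)
  have E: "equiv UNIV ?P" using C by (simp add: sg_congruence_def)
  obtain a0 where a0: "a0 \<in> I" using id by (auto simp: sg_ideal_def)
  have idl: "\<And>u v. v \<in> I \<Longrightarrow> u * v \<in> I" using id by (auto simp: sg_ideal_def)
  have sep2: "\<forall>a. a \<notin> I \<longrightarrow> s*a \<notin> I"
    using sep by (simp add: separator_def idealizer_def)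
  have sI: "\<And>v. v \<in> I \<longleftrightarrow> s * v \<in> I"
    using sep2 idl by blast
  have inI: "b \<in> I \<longleftrightarrow> (a0, b) \<in> ?P" for b
  proof
    assume b: "b \<in> I"
    show "(a0, b) \<in> ?P" unfolding pc_iff
    proof (intro allI)
      fix x y
      have "x*a0*y = (x*y)*a0" "x*b*y = (x*y)*b" by (simp_all add: ac_simps)
      thus "x*a0*y \<in> I \<longleftrightarrow> x*b*y \<in> I" using idl a0 b by simp
    qed
  next
    assume "(a0,b) \<in> ?P"
    hence "s*a0*s \<in> I \<longleftrightarrow> s*b*s \<in> I" unfolding pc_iff by blast
    moreover have "s*a0*s = (s*s)*a0" "s*b*s = s*(s*b)" by (simp_all add: ac_simps)
    ultimately have "s*(s*b) \<in> I" using idl a0 by simp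
    thus "b \<in> I" using sI by blast
  qed
  have ClI: "I = ?P``{a0}" using inI by auto
  have inS: "b \<in> separator I \<longleftrightarrow> (s, b) \<in> ?P" for b
  proof
    assume b: "b \<in> separator I"
    have sb2: "\<forall>a. a \<notin> I \<longrightarrow> b*a \<notin> I"
      using b by (simp add: separator_def idealizer_def)
    have sb: "\<And>v. v \<in> I \<longleftrightarrow> b * v \<in> I"
      using sb2 idl by blast
    show "(s,b) \<in> ?P" unfolding pc_iff
    proof (intro allI)
      fix x y
      have "x*s*y = s*(x*y)" "x*b*y = b*(x*y)" by (simp_all add: ac_simps)
      thus "x*s*y \<in> I \<longleftrightarrow> x*b*y \<in> I" using sI[of "x*y"] sb[of "x*y"] by simp
    qed
  next
    assume "(s,b) \<in> ?P"
    hence r: "\<And>x y. x*s*y \<in> I \<longleftrightarrow> x*b*y \<in> I" unfolding pc_iff by blast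
    have "a * b \<notin> I" if "a \<notin> I" for a
    proof
      assume "a*b \<in> I"
      moreover have "s*b*a = s*(a*b)" by (simp add: ac_simps)
      ultimately have "s*b*a \<in> I" using idl by simp
      hence "s*s*a \<in> I" using r by blast
      moreover have "s*s*a = s*(s*a)" by (simp add: ac_simps)
      ultimately show False using sI that by simp
    qed
    thus "b \<in> separator I" using idl
      by (auto simp: separator_def idealizer_def mult.commute)
  qed
  have ClS: "separator I = ?P``{s}" using inS by auto
  let ?S = "UNIV // ?P" and ?m = "quot_mult ?P"
  have qmP: "\<And>a b. ?m (?P``{a}) (?P``{b}) = ?P``{a*b}" using qm[OF C] .
  have clsI: "?P``{v} = ?P``{a0} \<longleftrightarrow> v \<in> I" for v
    using inI E cls_eq by (metis equiv_def sym_def)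
  have ann: "?P``{u} \<in> annih ?S ?m (?P``{a0}) (?P``{a}) \<longleftrightarrow> u*a \<in> I" for u a
    by (simp add: annih_def quotientI qmP clsI)
  have "cond_star ?S ?m"
    unfolding cond_star_def
  proof (intro conjI ballI)
    fix X Y assume "X \<in> ?S" "Y \<in> ?S"
    then obtain a b where "X = ?P``{a}" "Y = ?P``{b}" by (metis quot_ex)
    thus "?m X Y \<in> ?S" "?m X Y = ?m Y X" using qmP by (auto simp: quotientI mult.commute)
  next
    fix X Y W assume "X \<in> ?S" "Y \<in> ?S" "W \<in> ?S"
    then obtain a b c where "X = ?P``{a}" "Y = ?P``{b}" "W = ?P``{c}" by (metis quot_ex)
    thus "?m (?m X Y) W = ?m X (?m Y W)" using qmP by (simp add: mult.assoc)
  next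
    show "\<exists>e\<in>?S. \<exists>z\<in>?S. (\<forall>x\<in>?S. ?m e x = x \<and> ?m x e = x) \<and>
        (\<forall>x\<in>?S. ?m z x = z \<and> ?m x z = z) \<and>
        (\<forall>s\<in>?S. s \<noteq> e \<longrightarrow> annih ?S ?m z s \<noteq> {z}) \<and>
        (\<forall>s\<in>?S. \<forall>t\<in>?S. annih ?S ?m z s = annih ?S ?m z t \<longrightarrow> s = t)"
    proof (intro bexI conjI ballI impI)
      fix X assume "X \<in> ?S"
      then obtain a where X: "X = ?P``{a}" by (metis quot_ex)
      have "(s*a, a) \<in> ?P" unfolding pc_iff
      proof (intro allI)
        fix x y
        have "x*(s*a)*y = s*(x*a*y)" by (simp add: ac_simps)
        thus "x*(s*a)*y \<in> I \<longleftrightarrow> x*a*y \<in> I" using sI[of "x*a*y"] by simp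
      qed
      hence "?P``{s*a} = ?P``{a}" using E cls_eq by metis
      moreover have "a*s = s*a" by (simp add: mult.commute)
      ultimately have "?P``{s*a} = ?P``{a}" "?P``{a*s} = ?P``{a}" by simp_all
      thus "?m (?P``{s}) X = X" "?m X (?P``{s}) = X" using X qmP by auto
      have "a0*a \<in> I" "a*a0 \<in> I" using idl a0 by (auto simp: mult.commute)
      hence "?P``{a0*a} = ?P``{a0}" "?P``{a*a0} = ?P``{a0}" using inI E cls_eq by metis+
      thus "?m (?P``{a0}) X = ?P``{a0}" "?m X (?P``{a0}) = ?P``{a0}" using X qmP by auto
    next
      fix X assume X0: "X \<in> ?S" and ne: "X \<noteq> ?P``{s}"
      then obtain a where X: "X = ?P``{a}" by (metis quot_ex)
      have "(s,a) \<notin> ?P" using ne X E cls_eq by metis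
      then obtain x y where "\<not> (x*s*y \<in> I \<longleftrightarrow> x*a*y \<in> I)" unfolding pc_iff by blast
      moreover have "x*s*y = s*(x*y)" "x*a*y = a*(x*y)" by (simp_all add: ac_simps)
      ultimately have xy0: "x*y \<notin> I" "a*(x*y) \<in> I" using sI idl by auto
      hence xy: "x*y \<notin> I" "(x*y)*a \<in> I" by (simp_all add: mult.commute)
      have "?P``{x*y} \<in> annih ?S ?m (?P``{a0}) X" using ann X xy by blast
      moreover have "?P``{x*y} \<noteq> ?P``{a0}" using xy clsI by simp
      ultimately show "annih ?S ?m (?P``{a0}) X \<noteq> {?P``{a0}}" by auto
    next
      fix X Y assume "X \<in> ?S" "Y \<in> ?S"
        and eqa: "annih ?S ?m (?P``{a0}) X = annih ?S ?m (?P``{a0}) Y"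
      then obtain a b where X: "X = ?P``{a}" and Y: "Y = ?P``{b}" by (metis quot_ex)
      have uu: "u*a \<in> I \<longleftrightarrow> u*b \<in> I" for u using ann[of u a] ann[of u b] eqa X Y by simp
      have "x*a*y \<in> I \<longleftrightarrow> x*b*y \<in> I" for x y
      proof -
        have "x*a*y = (x*y)*a" "x*b*y = (x*y)*b" by (simp_all add: ac_simps)
        thus ?thesis using uu[of "x*y"] by simp
      qed
      hence "(a,b) \<in> ?P" unfolding pc_iff by blast
      thus "X = Y" using X Y E cls_eq by metis
    qed (auto simp: quotientI)
  qed
  moreover have "I \<in> ?S" by (subst ClI) (rule quotientI, simp)
  moreover have "separator I \<in> ?S" by (subst ClS) (rule quotientI, simp)
  ultimately show ?thesis using C by blast
qed

lemma cs_obtain: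
  assumes "cond_star S m"
  obtains e z where "e\<in>S" "z\<in>S" "\<forall>x\<in>S. m e x = x \<and> m x e = x" "\<forall>x\<in>S. m z x = z \<and> m x z = z"
    "\<forall>s\<in>S. \<forall>t\<in>S. annih S m z s = annih S m z t \<longrightarrow> s = t"
  using assms unfolding cond_star_def by blast

lemma part2:
  fixes \<alpha> :: "'a::ab_semigroup_mult rel"
  assumes C: "sg_congruence \<alpha>" and cs: "cond_star (UNIV // \<alpha>) (quot_mult \<alpha>)"
  shows "\<exists>I. sg_ideal I \<and> \<alpha> = princ_cong I"
proof -
  let ?S = "UNIV // \<alpha>" and ?m = "quot_mult \<alpha>"
  have E: "equiv UNIV \<alpha>" using C by (simp add: sg_congruence_def)
  have qmP: "\<And>a b. ?m (\<alpha>``{a}) (\<alpha>``{b}) = \<alpha>``{a*b}" using qm[OF C] .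
  obtain e z where eS: "e \<in> ?S" and zS: "z \<in> ?S" and
    ide: "\<forall>x\<in>?S. ?m e x = x \<and> ?m x e = x" and
    zer: "\<forall>x\<in>?S. ?m z x = z \<and> ?m x z = z" and
    inj: "\<forall>s\<in>?S. \<forall>t\<in>?S. annih ?S ?m z s = annih ?S ?m z t \<longrightarrow> s = t"
    by (rule cs_obtain[OF cs])
  obtain e0 where e0: "e = \<alpha>``{e0}" using quot_ex[OF eS] by blast
  obtain z0 where z0: "z = \<alpha>``{z0}" using quot_ex[OF zS] by blast
  let ?I = "\<alpha>``{z0}"
  have inI: "v \<in> ?I \<longleftrightarrow> \<alpha>``{v} = z" for v
  proof -
    have "v \<in> ?I \<longleftrightarrow> (z0,v) \<in> \<alpha>" by simp
    also have "\<dots> \<longleftrightarrow> \<alpha>``{z0} = \<alpha>``{v}" by (simp add: cls_eq[OF E])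
    also have "\<dots> \<longleftrightarrow> \<alpha>``{v} = z" unfolding z0 by (rule eq_commute)
    finally show ?thesis .
  qed
  have zprod: "\<alpha>``{u*v} = z" if "\<alpha>``{v} = z" for u v
  proof -
    have "\<alpha>``{u} \<in> ?S" by (simp add: quotientI)
    with zer have "?m z (\<alpha>``{u}) = z \<and> ?m (\<alpha>``{u}) z = z" by (rule bspec)
    hence h: "?m (\<alpha>``{u}) z = z" by (rule conjunct2)
    have "?m (\<alpha>``{u}) (\<alpha>``{v}) = z" unfolding that by (rule h)
    thus ?thesis unfolding qmP .
  qed
  have idl: "sg_ideal ?I"
    unfolding sg_ideal_def
  proof (intro conjI allI impI)
    have "z0 \<in> ?I" by (rule equiv_class_self[OF E]) simp
    thus "?I \<noteq> {}" by blast
  next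
    fix s a assume "a \<in> ?I"
    hence "\<alpha>``{a} = z" using inI by blast
    hence "\<alpha>``{s*a} = z" by (rule zprod)
    moreover have "a*s = s*a" by (simp add: mult.commute)
    ultimately show "s*a \<in> ?I" "a*s \<in> ?I" using inI by simp_all
  qed
  have ann: "\<alpha>``{u} \<in> annih ?S ?m z (\<alpha>``{a}) \<longleftrightarrow> u*a \<in> ?I" for u a
  proof -
    have uS: "\<alpha>``{u} \<in> ?S" by (rule quotientI) simp
    have "\<alpha>``{u} \<in> annih ?S ?m z (\<alpha>``{a}) \<longleftrightarrow> ?m (\<alpha>``{u}) (\<alpha>``{a}) = z"
      by (simp only: annih_def mem_Collect_eq uS simp_thms)
    hence "\<alpha>``{u} \<in> annih ?S ?m z (\<alpha>``{a}) \<longleftrightarrow> \<alpha>``{u*a} = z" unfolding qmP .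
    thus ?thesis using inI[of "u*a"] by blast
  qed
  have eid: "\<alpha>``{v*e0} = \<alpha>``{v}" for v
  proof -
    have "\<alpha>``{v} \<in> ?S" by (simp add: quotientI)
    with ide have "?m e (\<alpha>``{v}) = \<alpha>``{v} \<and> ?m (\<alpha>``{v}) e = \<alpha>``{v}" by (rule bspec)
    hence "?m (\<alpha>``{v}) e = \<alpha>``{v}" by (rule conjunct2)
    thus ?thesis unfolding e0 qmP .
  qed
  have "\<alpha> = princ_cong ?I"
  proof (intro set_eqI iffI)
    fix p assume p: "p \<in> \<alpha>"
    obtain a b where ab: "p = (a,b)" by fastforce
    have "(x*a*y, x*b*y) \<in> \<alpha>" for x y
    proof -
      have "(x*a, x*b) \<in> \<alpha>" using C p ab unfolding sg_congruence_def by blast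
      thus ?thesis using C unfolding sg_congruence_def by blast
    qed
    hence cc: "\<alpha>``{x*a*y} = \<alpha>``{x*b*y}" for x y by (simp add: cls_eq[OF E])
    show "p \<in> princ_cong ?I" unfolding ab pc_iff
    proof (intro allI)
      fix x y show "x*a*y \<in> ?I \<longleftrightarrow> x*b*y \<in> ?I"
        by (simp only: inI cc)
    qed
  next
    fix p assume p: "p \<in> princ_cong ?I"
    obtain a b where ab: "p = (a,b)" by fastforce
    have r: "x*a*y \<in> ?I \<longleftrightarrow> x*b*y \<in> ?I" for x y using p unfolding ab pc_iff by blast
    have uu: "u*a \<in> ?I \<longleftrightarrow> u*b \<in> ?I" for u
    proof -
      have "u*a \<in> ?I \<longleftrightarrow> u*a*e0 \<in> ?I" by (simp only: inI eid)
      also have "\<dots> \<longleftrightarrow> u*b*e0 \<in> ?I" using r[of u e0] .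
      also have "\<dots> \<longleftrightarrow> u*b \<in> ?I" by (simp only: inI eid)
      finally show ?thesis .
    qed
    hence eqn: "annih ?S ?m z (\<alpha>``{a}) = annih ?S ?m z (\<alpha>``{b})"
    proof (intro set_eqI)
      fix X
      show "X \<in> annih ?S ?m z (\<alpha>``{a}) \<longleftrightarrow> X \<in> annih ?S ?m z (\<alpha>``{b})"
      proof (cases "X \<in> ?S")
        case True
        then obtain u where "X = \<alpha>``{u}" using quot_ex by blast
        thus ?thesis using ann[of u a] ann[of u b] uu[of u] by simp
      qed (simp add: annih_def)
    qed
    have aS: "\<alpha>``{a} \<in> ?S" and bS: "\<alpha>``{b} \<in> ?S" by (simp_all add: quotientI)
    have "\<alpha>``{a} = \<alpha>``{b}" by (rule inj[rule_format, OF aS bS eqn])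
    thus "p \<in> \<alpha>" using ab by (simp add: cls_eq[OF E])
  qed
  with idl have "sg_ideal ?I \<and> \<alpha> = princ_cong ?I" by (rule conjI)
  thus ?thesis by (rule exI)
qed

theorem theorem1:
  shows "(\<forall>I :: 'a::ab_semigroup_mult set. sg_ideal I \<and> separator I \<noteq> {} \<longrightarrow>
            sg_congruence (princ_cong I) \<and>
            I \<in> UNIV // princ_cong I \<and> separator I \<in> UNIV // princ_cong I \<and>
            cond_star (UNIV // princ_cong I) (quot_mult (princ_cong I))) \<and>
         (\<forall>\<alpha> :: 'a rel. sg_congruence \<alpha> \<and> cond_star (UNIV // \<alpha>) (quot_mult \<alpha>) \<longrightarrow>
            (\<exists>I. sg_ideal I \<and> \<alpha> = princ_cong I))"
  using part1 part2 by blast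

end
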